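(* Let $3\le a<b$ be integers and for $z\in(0,1)$ let $g(z,a,b)=f(z)(b-1)(a-1)+\frac{1}{1-z}+2-b-a$. Then: (i) as a function of $z\in(0,1)$, $g$ is strictly decreasing, attains a global minimum, and is strictly increasing afterwards; the global minimum point is the only point where $\partial g/\partial z=0$; (ii) $g(z)>0$ for all $z\in(0,z_l]$; (iii) $g(z)>0$ for all $z\in[z_r,1)$; (iv) if $\min_{z} g(z)<0$, then $g$ has exactly two roots $z_1<z_2$ in $(0,1)$, and $z_1,z_2\in(z_l,z_r)$; (v) for every $z\in(z_l,1)$, $g(z,a,b)>g(z,a,b+1)$; (vi) for each fixed $a\ge3$ there is a threshold $b'\ge a+1$ such that $\min_z g(z,a,b)\ge 0$ for all $b$ with $a<b<b'$, and $\min_z g(z,a,b)<0$ for all $b\ge b'$.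
   Context: $f(z)=\frac{-\ln(1-z)(1-z)}{z}$ for $z\in(0,1)$ (a strictly decreasing bijection onto $(0,1)$). $z_l$ is the unique $z\in(0,1)$ with $f(z)=\frac1{a-1}$, and $z_r$ the unique $z\in(0,1)$ with $f(z)=\frac1{b-1}$ (these depend on $a$, resp. $b$). *)

theory Defs
  imports "HOL-Analysis.Analysis"
begin

definition f :: "real \<Rightarrow> real" where
  "f z = - ln (1 - z) * (1 - z) / z"

definition zsol :: "real \<Rightarrow> real" where
  "zsol c = (THE z. 0 < z \<and> z < 1 \<and> f z = 1 / (c - 1))"

definition zl :: "real \<Rightarrow> real" where "zl a = zsol a"
definition zr :: "real \<Rightarrow> real" where "zr b = zsol b"

definition g :: "real \<Rightarrow> real \<Rightarrow> real \<Rightarrow> real" where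
  "g z a b = f z * (b - 1) * (a - 1) + 1 / (1 - z) + 2 - b - a"

definition gmin :: "real \<Rightarrow> real \<Rightarrow> real" where
  "gmin a b = (INF z\<in>{0<..<1}. g z a b)"

end

theory Submission
  imports Defs
begin


definition phi :: "real \<Rightarrow> real" where "phi z = - ln (1 - z) - z"
definition kk :: "real \<Rightarrow> real" where "kk z = (1 - z)^2 * phi z / z^2"

lemma phi_deriv: "z < 1 \<Longrightarrow> (phi has_real_derivative z / (1 - z)) (at z)"
  unfolding phi_def
  by (rule derivative_eq_intros refl | simp)+ (simp add: field_simps)

lemma deriv_cont: "(\<And>x. x\<in>S \<Longrightarrow> \<exists>d. (h has_real_derivative d) (at x)) \<Longrightarrow> continuous_on S h"
  by (meson DERIV_isCont continuous_at_imp_continuous_on)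

lemma phi_gt: assumes "0 < z" "z < 1" shows "phi z > z^2/2"
proof -
  define s where "s w = phi w - w^2/2" for w
  have d: "(s has_real_derivative z^2/(1-z)) (at z)" if "z < 1" for z
    unfolding s_def[abs_def]
    using that by (auto intro!: derivative_eq_intros phi_deriv simp: field_simps power2_eq_square)
  have "s 0 < s z"
  proof (rule DERIV_pos_imp_increasing_open[OF assms(1)])
    fix x assume "0 < x" "x < z"
    then show "\<exists>y. DERIV s x :> y \<and> y > 0" using d[of x] assms by (intro exI[of _ "x^2/(1-x)"]) auto
  next
    show "continuous_on {0..z} s"
    proof (intro deriv_cont)
      fix x assume "x \<in> {0..z}" then show "\<exists>d. (s has_real_derivative d) (at x)" using d[of x] assms by auto
    qed
  qed
  then show ?thesis by (simp add: s_def phi_def)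
qed

lemma phi_pos: "0 < z \<Longrightarrow> z < 1 \<Longrightarrow> phi z > 0"
  using phi_gt[of z] by (smt (verit) zero_less_power2 divide_pos_pos)

lemma f_alt: "f z = (phi z + z) * (1 - z) / z"
  by (simp add: f_def phi_def)

lemma f_deriv: "0 < z \<Longrightarrow> z < 1 \<Longrightarrow> (f has_real_derivative - phi z / z^2) (at z)"
  unfolding f_def[abs_def] phi_def
  by (rule derivative_eq_intros refl | simp)+ (simp add: field_simps power2_eq_square)


lemma kk_deriv: "0 < z \<Longrightarrow> z < 1 \<Longrightarrow> (kk has_real_derivative (1-z)*(z^2 - 2*phi z)/z^3) (at z)"
  unfolding kk_def[abs_def]
  by (rule derivative_eq_intros refl phi_deriv | simp)+ (simp add: field_simps eval_nat_numeral)

lemma kk_deriv_neg: "0 < z \<Longrightarrow> z < 1 \<Longrightarrow> (1-z)*(z^2 - 2*phi z)/z^3 < 0"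
  using phi_gt[of z] by (intro divide_neg_pos mult_pos_neg) auto

lemma kk_strict: assumes "0 < z1" "z1 < z2" "z2 < 1" shows "kk z2 < kk z1"
proof (rule DERIV_neg_imp_decreasing_open[OF assms(2)])
  fix x assume "z1 < x" "x < z2"
  then show "\<exists>y. DERIV kk x :> y \<and> y < 0" using assms kk_deriv kk_deriv_neg by fastforce
next
  show "continuous_on {z1..z2} kk"
  proof (intro deriv_cont)
    fix x assume "x \<in> {z1..z2}" then show "\<exists>d. (kk has_real_derivative d) (at x)" using kk_deriv[of x] assms by auto
  qed
qed

lemma f_strict: assumes "0 < z1" "z1 < z2" "z2 < 1" shows "f z2 < f z1"
proof (rule DERIV_neg_imp_decreasing_open[OF assms(2)])
  fix x assume "z1 < x" "x < z2"
  then show "\<exists>y. DERIV f x :> y \<and> y < 0" using assms f_deriv phi_pos[of x]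
    by (intro exI[of _ "- phi x / x^2"]) (auto intro!: divide_pos_pos)
next
  show "continuous_on {z1..z2} f"
  proof (intro deriv_cont)
    fix x assume "x \<in> {z1..z2}" then show "\<exists>d. (f has_real_derivative d) (at x)" using f_deriv[of x] assms by auto
  qed
qed

lemma f_pos: "0 < z \<Longrightarrow> z < 1 \<Longrightarrow> f z > 0"
  using phi_gt[of z] unfolding f_alt by (intro divide_pos_pos mult_pos_pos) (auto, smt (verit) zero_le_power2)

lemma f_gt_1mz: "0 < z \<Longrightarrow> z < 1 \<Longrightarrow> f z > 1 - z"
proof -
  assume a: "0 < z" "z < 1"
  have "(phi z + z) * (1 - z) / z > z * (1-z)/z"
    using phi_gt[OF a] a by (intro divide_strict_right_mono mult_strict_right_mono) (auto, smt (verit) zero_le_power2)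
  then show ?thesis using a by (simp add: f_alt)
qed

lemma f_big: assumes "0 < t" "t < 1" shows "f ((1-t)/2) > t"
proof -
  define z where "z = (1-t)/2"
  have z: "0 < z" "z < 1" "1 - z > t" using assms unfolding z_def by (auto simp: field_simps)
  have A: "(phi z + z) * (1 - z) / z > (z^2/2 + z) * (1-z)/z"
    using phi_gt[OF z(1,2)] z by (intro divide_strict_right_mono mult_strict_right_mono) auto
  have B: "(z^2/2 + z) * (1-z)/z = (z/2+1)*(1-z)" using z by (simp add: field_simps power2_eq_square)
  have C: "(z/2+1)*(1-z) \<ge> 1 - z" using z by (simp add: algebra_simps)
  have "f z = (phi z + z) * (1 - z) / z" by (simp add: f_alt)
  then have "f z > t" using A B C z(3) by linarith
  then show ?thesis by (simp add: z_def)
qed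

lemma f_small: assumes "0 < t" "t < 1" shows "f (1 - (t/4)^2) < t"
proof -
  define u where "u = (t/4)^2"
  have "t*t < t*1" using assms by (intro mult_strict_left_mono) auto
  hence "t*t \<le> 1" using assms by linarith
  hence u: "0 < u" "u \<le> 1/16" using assms by (auto simp: u_def power2_eq_square)
  have "ln u = 2 * ln (t/4)" unfolding u_def by (simp add: ln_realpow)
  also have "ln (t/4) = - ln (4/t)" using assms by (simp add: ln_div)
  finally have lu: "- ln u = 2 * ln (4/t)" by simp
  have "ln (4/t) < 4/t" using assms by simp
  hence lu2: "- ln u < 8/t" using lu by simp
  have "f (1 - u) = (- ln u) * u / (1 - u)" by (simp add: f_def)
  also have "\<dots> < (8/t) * u / (1 - u)" using lu2 u by (intro divide_strict_right_mono mult_strict_right_mono) auto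
  also have "(8/t) * u = t/2" using assms by (simp add: u_def field_simps power2_eq_square)
  also have "t/2 / (1-u) \<le> t" using u assms by (simp add: field_simps)
  finally show ?thesis by (simp add: u_def)
qed

lemma f_cont: "0 < z \<Longrightarrow> z < 1 \<Longrightarrow> isCont f z"
  using f_deriv DERIV_isCont by blast

lemma zsol_ex: assumes "0 < t" "t < 1" shows "\<exists>z. 0 < z \<and> z < 1 \<and> f z = t"
proof -
  have "t*t < t*1" using assms by (intro mult_strict_left_mono) auto
  hence "t*t \<le> 1" using assms by linarith
  hence u: "0 < (t/4)^2" "(t/4)^2 \<le> 1/16" using assms by (auto simp: power2_eq_square)
  have "\<exists>z\<ge>(1-t)/2. z \<le> 1 - (t/4)^2 \<and> f z = t"
  proof (rule IVT2)
    show "f (1 - (t/4)^2) \<le> t" using f_small[OF assms] by simp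
    show "t \<le> f ((1-t)/2)" using f_big[OF assms] by simp
    show "(1-t)/2 \<le> 1 - (t/4)^2" using assms u by simp
    show "\<forall>x. (1-t)/2 \<le> x \<and> x \<le> 1 - (t/4)^2 \<longrightarrow> isCont f x"
    proof (intro allI impI)
      fix x assume "(1-t)/2 \<le> x \<and> x \<le> 1 - (t/4)^2"
      then have a1: "(1-t)/2 \<le> x" and a2: "x \<le> 1 - (t/4)^2" by auto
      have "0 < x" using assms a1 by simp
      moreover have "x < 1" using u(1) a2 by linarith
      ultimately show "isCont f x" by (rule f_cont)
    qed
  qed
  then obtain z where z: "(1-t)/2 \<le> z" "z \<le> 1 - (t/4)^2" "f z = t" by blast
  have "0 < z" using z(1) assms by simp
  moreover have "z < 1" using z(2) u(1) by linarith
  ultimately show ?thesis using z(3) by blast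
qed

lemma f_inj: "0 < z \<Longrightarrow> z < 1 \<Longrightarrow> 0 < w \<Longrightarrow> w < 1 \<Longrightarrow> f z = f w \<Longrightarrow> z = w"
  using f_strict[of w z] f_strict[of z w] by (smt (verit))

lemma f_le_iff: "0 < z \<Longrightarrow> z < 1 \<Longrightarrow> 0 < w \<Longrightarrow> w < 1 \<Longrightarrow> f z \<le> f w \<longleftrightarrow> w \<le> z"
  using f_strict[of w z] f_strict[of z w] by (smt (verit))

lemma f_less_iff: "0 < z \<Longrightarrow> z < 1 \<Longrightarrow> 0 < w \<Longrightarrow> w < 1 \<Longrightarrow> f z < f w \<longleftrightarrow> w < z"
  using f_strict[of w z] f_strict[of z w] by (smt (verit))

lemma zsol_props: assumes "c > 2" shows "0 < zsol c \<and> zsol c < 1 \<and> f (zsol c) = 1/(c-1)"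
proof -
  have "0 < 1/(c-1)" "1/(c-1) < 1" using assms by (auto simp: field_simps)
  then obtain z where z: "0 < z" "z < 1" "f z = 1/(c-1)" using zsol_ex by blast
  have "\<exists>!z. 0 < z \<and> z < 1 \<and> f z = 1/(c-1)"
    by (rule ex1I[of _ z]) (use z f_inj in auto)
  then show ?thesis unfolding zsol_def by (rule theI')
qed



lemma g_deriv: assumes "0 < z" "z < 1"
  shows "((\<lambda>w. g w a b) has_real_derivative (1 - (a-1)*(b-1)*kk z)/(1-z)^2) (at z)"
proof -
  have "((\<lambda>w. g w a b) has_real_derivative (- phi z / z^2)*(b-1)*(a-1) + 1/(1-z)^2) (at z)"
    unfolding g_def using assms
    by (auto intro!: derivative_eq_intros f_deriv simp: power2_eq_square field_simps)
  moreover have "(- phi z / z^2)*(b-1)*(a-1) + 1/(1-z)^2 = (1 - (a-1)*(b-1)*kk z)/(1-z)^2"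
  proof -
    have nz: "1 - z \<noteq> 0" "z \<noteq> 0" using assms by auto
    show ?thesis using nz by (simp add: kk_def field_simps)
  qed
  ultimately show ?thesis by simp
qed

lemma kk_gt: assumes "0 < z" "z < 1" shows "kk z > (1-z)^2/2"
proof -
  have "(1-z)^2 * (z^2/2) / z^2 < (1-z)^2 * phi z / z^2"
    using phi_gt[OF assms] assms by (intro divide_strict_right_mono mult_strict_left_mono) auto
  then show ?thesis using assms by (simp add: kk_def)
qed

lemma kk_small: assumes "0 < u" "u \<le> 1/2" shows "kk (1-u) < 4*u"
proof -
  have "phi (1-u) = ln (1/u) - (1-u)" using assms by (simp add: phi_def ln_div)
  also have "\<dots> < 1/u"
  proof -
    have "ln (1/u) < 1/u" using assms by (intro ln_less_self) simp
    then show ?thesis using assms by linarith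
  qed
  finally have p: "phi (1-u) < 1/u" .
  have "kk (1-u) = u^2 * phi (1-u) / (1-u)^2" by (simp add: kk_def)
  also have "\<dots> < u^2 * (1/u) / (1-u)^2" using p assms by (intro divide_strict_right_mono mult_strict_left_mono) auto
  also have "u^2 * (1/u) / (1-u)^2 = u / (1-u)^2" using assms by (simp add: power2_eq_square)
  also have "\<dots> \<le> u / (1/4)"
  proof -
    have "(1/2)^2 \<le> (1-u)^2" using assms by (intro power_mono) auto
    then have q: "1/4 \<le> (1-u)^2" by (simp add: power2_eq_square)
    show ?thesis using q assms by (intro divide_left_mono) auto
  qed
  finally show ?thesis by simp
qed

lemma kk_cont: "0 < z \<Longrightarrow> z < 1 \<Longrightarrow> isCont kk z"
  using kk_deriv DERIV_isCont by blast

lemma g_cont: "0 < z \<Longrightarrow> z < 1 \<Longrightarrow> isCont (\<lambda>w. g w a b) z"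
  using g_deriv DERIV_isCont by blast

lemma kk_root: assumes "P > 4" shows "\<exists>m. 0 < m \<and> m < 1 \<and> kk m = 1/P"
proof -
  define u where "u = 1/(4*P)"
  have u: "0 < u" "u \<le> 1/16" using assms by (auto simp: u_def field_simps)
  have "\<exists>z\<ge>1/4. z \<le> 1 - u \<and> kk z = 1/P"
  proof (rule IVT2)
    show "kk (1-u) \<le> 1/P" using kk_small[of u] u by (simp add: u_def)
    have "kk (1/4) > (1 - 1/4)^2/2" by (rule kk_gt) auto
    moreover have "1/P < 1/4" using assms by (simp add: field_simps)
    ultimately show "1/P \<le> kk (1/4)" by (simp add: power2_eq_square)
    show "1/4 \<le> 1 - u" using u by simp
    show "\<forall>x. 1/4 \<le> x \<and> x \<le> 1 - u \<longrightarrow> isCont kk x"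
    proof (intro allI impI)
      fix x assume "1/4 \<le> x \<and> x \<le> 1 - u"
      then have a1: "1/4 \<le> x" and a2: "x \<le> 1 - u" by auto
      have "0 < x" using a1 by simp
      moreover have "x < 1" using u(1) a2 by linarith
      ultimately show "isCont kk x" by (rule kk_cont)
    qed
  qed
  then obtain z where "1/4 \<le> z" "z \<le> 1 - u" "kk z = 1/P" by blast
  moreover have "0 < z" using \<open>1/4 \<le> z\<close> by simp
  moreover have "z < 1" using \<open>z \<le> 1 - u\<close> u(1) by linarith
  ultimately show ?thesis by blast
qed



lemma g_cont_on: "0 < r \<Longrightarrow> s < 1 \<Longrightarrow> continuous_on {r..s} (\<lambda>w. g w a b)"
proof (intro deriv_cont)
  fix x assume "0 < r" "s < 1" "x \<in> {r..s}"
  then show "\<exists>d. ((\<lambda>w. g w a b) has_real_derivative d) (at x)" using g_deriv[of x a b] by auto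
qed

lemma g_analysis:
  fixes a b :: real assumes "3 \<le> a" "a < b"
  obtains m where "0 < m" "m < 1"
    "strict_antimono_on {0<..m} (\<lambda>z. g z a b)"
    "strict_mono_on {m..<1} (\<lambda>z. g z a b)"
    "\<forall>z\<in>{0<..<1}. g m a b \<le> g z a b"
    "\<forall>z\<in>{0<..<1}. deriv (\<lambda>w. g w a b) z = 0 \<longleftrightarrow> z = m"
    "gmin a b = g m a b"
proof -
  define P where "P = (a-1)*(b-1)"
  have "2*2 < (a-1)*(b-1)" using assms by (intro mult_le_less_imp_less) auto
  hence P4: "P > 4" by (simp add: P_def)
  obtain m where m: "0 < m" "m < 1" "kk m = 1/P" using kk_root[OF P4] by blast
  define D where "D z = (1 - (a-1)*(b-1)*kk z)/(1-z)^2" for z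
  have gd: "((\<lambda>w. g w a b) has_real_derivative D z) (at z)" if "0 < z" "z < 1" for z
    unfolding D_def by (rule g_deriv[OF that])
  have neg: "D z < 0" if "0 < z" "z < m" for z
  proof -
    have "kk z > kk m" using kk_strict[of z m] that m by auto
    hence "P * kk z > P * (1/P)" using P4 m by (intro mult_strict_left_mono) auto
    hence "P * kk z > 1" using P4 by simp
    hence "1 - (a-1)*(b-1)*kk z < 0" by (simp add: P_def)
    moreover have "(1-z)^2 > 0" using that m by simp
    ultimately show ?thesis unfolding D_def by (rule divide_neg_pos)
  qed
  have pos: "D z > 0" if "m < z" "z < 1" for z
  proof -
    have "kk z < kk m" using kk_strict[of m z] that m by auto
    hence "P * kk z < P * (1/P)" using P4 m by (intro mult_strict_left_mono) auto
    hence "P * kk z < 1" using P4 by simp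
    hence "1 - (a-1)*(b-1)*kk z > 0" by (simp add: P_def)
    moreover have "(1-z)^2 > 0" using that m by simp
    ultimately show ?thesis unfolding D_def by (rule divide_pos_pos)
  qed
  have zero: "D m = 0" using m P4 by (simp add: D_def P_def[symmetric])
  have anti: "strict_antimono_on {0<..m} (\<lambda>z. g z a b)"
    unfolding monotone_on_def
  proof (intro ballI impI)
    fix r s assume rs: "r \<in> {0<..m}" "s \<in> {0<..m}" "r < s"
    show "g s a b < g r a b"
    proof (rule DERIV_neg_imp_decreasing_open[OF rs(3)])
      fix x assume "r < x" "x < s"
      then show "\<exists>y. ((\<lambda>z. g z a b) has_real_derivative y) (at x) \<and> y < 0"
        using rs m gd neg by (intro exI[of _ "D x"]) auto
    next
      show "continuous_on {r..s} (\<lambda>z. g z a b)" using rs m by (intro g_cont_on) auto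
    qed
  qed
  have mon: "strict_mono_on {m..<1} (\<lambda>z. g z a b)"
    unfolding monotone_on_def
  proof (intro ballI impI)
    fix r s assume rs: "r \<in> {m..<1}" "s \<in> {m..<1}" "r < s"
    show "g r a b < g s a b"
    proof (rule DERIV_pos_imp_increasing_open[OF rs(3)])
      fix x assume "r < x" "x < s"
      then show "\<exists>y. ((\<lambda>z. g z a b) has_real_derivative y) (at x) \<and> y > 0"
        using rs m gd pos by (intro exI[of _ "D x"]) auto
    next
      show "continuous_on {r..s} (\<lambda>z. g z a b)" using rs m by (intro g_cont_on) auto
    qed
  qed
  have mn: "\<forall>z\<in>{0<..<1}. g m a b \<le> g z a b"
  proof
    fix z assume z: "z \<in> {0<..<1::real}"
    consider "z < m" | "z = m" | "m < z" by linarith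
    then show "g m a b \<le> g z a b"
    proof cases
      case 1 then show ?thesis using anti z m unfolding monotone_on_def by force
    next
      case 2 then show ?thesis by simp
    next
      case 3 then show ?thesis using mon z m unfolding monotone_on_def by force
    qed
  qed
  have dv: "\<forall>z\<in>{0<..<1}. deriv (\<lambda>w. g w a b) z = 0 \<longleftrightarrow> z = m"
  proof
    fix z assume z: "z \<in> {0<..<1::real}"
    have "deriv (\<lambda>w. g w a b) z = D z" using gd[of z] z by (intro DERIV_imp_deriv) auto
    moreover have "D z = 0 \<longleftrightarrow> z = m" using neg[of z] pos[of z] zero z by (cases "z < m"; cases "z = m") auto
    ultimately show "deriv (\<lambda>w. g w a b) z = 0 \<longleftrightarrow> z = m" by simp
  qed
  have gm: "gmin a b = g m a b"
    unfolding gmin_def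
  proof (rule antisym)
    show "(INF z\<in>{0<..<1}. g z a b) \<le> g m a b"
      using mn m by (intro cINF_lower) (auto intro: bdd_belowI2)
    show "g m a b \<le> (INF z\<in>{0<..<1}. g z a b)"
      using mn by (intro cINF_greatest) auto
  qed
  show ?thesis using that m anti mon mn dv gm by blast
qed



lemma g_identity: assumes "0 < z" "z < 1"
  shows "g z a b = ((a-1)*f z - 1)*((b-1)*f z - 1)/f z + (1/(1-z) - 1/f z)"
proof -
  have "f z \<noteq> 0" using f_pos[OF assms] by simp
  then show ?thesis unfolding g_def by (simp add: field_simps)
qed

lemma Dpos: assumes "0 < z" "z < 1" shows "1/(1-z) - 1/f z > 0"
proof -
  have "1/f z < 1/(1-z)" using f_gt_1mz[OF assms] assms by (intro divide_strict_left_mono) auto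
  then show ?thesis by simp
qed

lemma zl_props: "a \<ge> 3 \<Longrightarrow> 0 < zl a \<and> zl a < 1 \<and> f (zl a) = 1/(a-1)"
  unfolding zl_def by (rule zsol_props) simp
lemma zr_props: "b > 3 \<Longrightarrow> 0 < zr b \<and> zr b < 1 \<and> f (zr b) = 1/(b-1)"
  unfolding zr_def by (rule zsol_props) simp

lemma g_pos_left: fixes a b :: real assumes "3 \<le> a" "a < b" "0 < z" "z \<le> zl a"
  shows "g z a b > 0"
proof -
  note zl = zl_props[OF assms(1)]
  have z1: "z < 1" using zl assms by linarith
  have fp: "f z > 0" using f_pos assms z1 by simp
  have "f z \<ge> 1/(a-1)" using f_le_iff[of "zl a" z] zl assms z1 by auto
  hence h1: "(a-1)*f z \<ge> 1" using assms by (simp add: field_simps)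
  have "(b-1)*f z \<ge> (a-1)*f z" using fp assms by (intro mult_right_mono) auto
  hence h2: "(b-1)*f z - 1 \<ge> 0" using h1 by linarith
  have "((a-1)*f z - 1)*((b-1)*f z - 1)/f z \<ge> 0" using h1 h2 fp by simp
  then show ?thesis using g_identity[OF assms(3) z1, of a b] Dpos[OF assms(3) z1] by linarith
qed

lemma g_pos_right: fixes a b :: real assumes "3 \<le> a" "a < b" "zr b \<le> z" "z < 1"
  shows "g z a b > 0"
proof -
  note zr = zr_props[of b] 
  have zr': "0 < zr b" "zr b < 1" "f (zr b) = 1/(b-1)" using zr assms by auto
  have z0: "0 < z" using zr' assms by linarith
  have fp: "f z > 0" using f_pos assms z0 by simp
  have "f z \<le> 1/(b-1)" using f_le_iff[of z "zr b"] zr' assms z0 by auto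
  hence h1: "(b-1)*f z \<le> 1" using assms by (simp add: field_simps)
  have "(a-1)*f z < (b-1)*f z" using fp assms by (intro mult_strict_right_mono) auto
  hence h2: "(a-1)*f z - 1 \<le> 0" using h1 by linarith
  have "((a-1)*f z - 1)*((b-1)*f z - 1) \<ge> 0" using h1 h2 by (intro mult_nonpos_nonpos) auto
  hence "((a-1)*f z - 1)*((b-1)*f z - 1)/f z \<ge> 0" using fp by simp
  then show ?thesis using g_identity[OF z0 assms(4), of a b] Dpos[OF z0 assms(4)] by linarith
qed

lemma g_decr_b: fixes a b :: real assumes "3 \<le> a" "zl a < z" "z < 1"
  shows "g z a b > g z a (b+1)"
proof -
  note zl = zl_props[OF assms(1)]
  have z0: "0 < z" using zl assms by linarith
  have "f z < 1/(a-1)" using f_less_iff[of z "zl a"] zl assms z0 by auto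
  hence "(a-1)*f z < 1" using assms by (simp add: field_simps)
  then show ?thesis unfolding g_def by (simp add: algebra_simps)
qed



lemma g_roots: fixes a b m :: real
  assumes ab: "3 \<le> a" "a < b" and m: "0 < m" "m < 1"
    and anti: "strict_antimono_on {0<..m} (\<lambda>z. g z a b)"
    and mon: "strict_mono_on {m..<1} (\<lambda>z. g z a b)"
    and neg: "g m a b < 0"
  shows "\<exists>z1 z2. z1 < z2 \<and> {z\<in>{0<..<1}. g z a b = 0} = {z1, z2} \<and> zl a < z1 \<and> z2 < zr b"
proof -
  note zl = zl_props[OF ab(1)]
  have zr: "0 < zr b" "zr b < 1" using zr_props[of b] ab by auto
  have gl: "g (zl a) a b > 0" using g_pos_left[OF ab] zl by auto
  have gr: "g (zr b) a b > 0" using g_pos_right[OF ab] zr by auto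
  have mzl: "zl a < m" using g_pos_left[OF ab m(1)] neg by (cases "m \<le> zl a") auto
  have mzr: "m < zr b" using g_pos_right[OF ab _ m(2)] neg by (cases "zr b \<le> m") auto
  have "\<exists>z\<ge>zl a. z \<le> m \<and> g z a b = 0"
    by (rule IVT2) (use neg gl mzl zl m in \<open>auto intro!: g_cont\<close>)
  then obtain z1 where z1: "zl a \<le> z1" "z1 \<le> m" "g z1 a b = 0" by blast
  have "\<exists>z\<ge>m. z \<le> zr b \<and> g z a b = 0"
    by (rule IVT) (use neg gr mzr zr m in \<open>auto intro!: g_cont\<close>)
  then obtain z2 where z2: "m \<le> z2" "z2 \<le> zr b" "g z2 a b = 0" by blast
  have z1': "zl a < z1" "z1 < m" using z1 gl neg by (auto simp: order_le_less)
  have z2': "m < z2" "z2 < zr b" using z2 gr neg by (auto simp: order_le_less)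
  have z10: "0 < z1" using zl z1' by linarith
  have z21: "z2 < 1" using zr z2' by linarith
  have "{z\<in>{0<..<1}. g z a b = 0} = {z1, z2}"
  proof (rule set_eqI, rule iffI)
    fix z assume "z \<in> {z\<in>{0<..<1}. g z a b = 0}"
    then have z: "0 < z" "z < 1" "g z a b = 0" by auto
    show "z \<in> {z1, z2}"
    proof (cases "z \<le> m")
      case True
      have A: "\<forall>x\<in>{0<..m}. \<forall>y\<in>{0<..m}. x < y \<longrightarrow> g y a b < g x a b" using anti by (simp add: monotone_on_def)
      have zin: "z \<in> {0<..m}" "z1 \<in> {0<..m}" using True z z10 z1' by auto
      have "z = z1"
      proof (rule ccontr)
        assume "z \<noteq> z1"
        then consider "z < z1" | "z1 < z" by linarith
        then show False
        proof cases
          case 1 then have "g z1 a b < g z a b" using A[rule_format, OF zin(1) zin(2) 1] by simp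
          then show False using z z1 by simp
        next
          case 2 then have "g z a b < g z1 a b" using A[rule_format, OF zin(2) zin(1) 2] by simp
          then show False using z z1 by simp
        qed
      qed
      then show ?thesis by simp
    next
      case False
      have A: "\<forall>x\<in>{m..<1}. \<forall>y\<in>{m..<1}. x < y \<longrightarrow> g x a b < g y a b" using mon by (simp add: monotone_on_def)
      have zin: "z \<in> {m..<1}" "z2 \<in> {m..<1}" using False z z21 z2' by auto
      have "z = z2"
      proof (rule ccontr)
        assume "z \<noteq> z2"
        then consider "z < z2" | "z2 < z" by linarith
        then show False
        proof cases
          case 1 then have "g z a b < g z2 a b" using A[rule_format, OF zin(1) zin(2) 1] by simp
          then show False using z z2 by simp
        next
          case 2 then have "g z2 a b < g z a b" using A[rule_format, OF zin(2) zin(1) 2] by simp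
          then show False using z z2 by simp
        qed
      qed
      then show ?thesis by simp
    qed
  next
    fix z assume "z \<in> {z1, z2}"
    then show "z \<in> {z\<in>{0<..<1}. g z a b = 0}" using z1 z2 z10 z21 z1' z2' m by auto
  qed
  moreover have "z1 < z2" using z1' z2' by linarith
  ultimately show ?thesis using z1'(1) z2'(2) by blast
qed



lemma per_b: fixes a b b1 :: real assumes ab: "3 \<le> a" "a < b" and b1: "b1 = b + 1"
  shows "(\<exists>m. 0 < m \<and> m < 1 \<and>
        strict_antimono_on {0<..m} (\<lambda>z. g z a b) \<and>
        strict_mono_on {m..<1} (\<lambda>z. g z a b) \<and>
        (\<forall>z\<in>{0<..<1}. g m a b \<le> g z a b) \<and>
        (\<forall>z\<in>{0<..<1}. deriv (\<lambda>w. g w a b) z = 0 \<longleftrightarrow> z = m))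
   \<and> (\<forall>z. 0 < z \<and> z \<le> zl a \<longrightarrow> g z a b > 0)
   \<and> (\<forall>z. zr b \<le> z \<and> z < 1 \<longrightarrow> g z a b > 0)
   \<and> (gmin a b < 0 \<longrightarrow>
        (\<exists>z1 z2. z1 < z2 \<and>
           {z\<in>{0<..<1}. g z a b = 0} = {z1, z2} \<and>
           zl a < z1 \<and> z2 < zr b))
   \<and> (\<forall>z. zl a < z \<and> z < 1 \<longrightarrow> g z a b > g z a b1)"
proof -
  obtain m where m: "0 < m" "m < 1"
    "strict_antimono_on {0<..m} (\<lambda>z. g z a b)"
    "strict_mono_on {m..<1} (\<lambda>z. g z a b)"
    "\<forall>z\<in>{0<..<1}. g m a b \<le> g z a b"
    "\<forall>z\<in>{0<..<1}. deriv (\<lambda>w. g w a b) z = 0 \<longleftrightarrow> z = m"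
    "gmin a b = g m a b"
    using g_analysis[OF ab] by blast
  have 1: "\<exists>m. 0 < m \<and> m < 1 \<and>
        strict_antimono_on {0<..m} (\<lambda>z. g z a b) \<and>
        strict_mono_on {m..<1} (\<lambda>z. g z a b) \<and>
        (\<forall>z\<in>{0<..<1}. g m a b \<le> g z a b) \<and>
        (\<forall>z\<in>{0<..<1}. deriv (\<lambda>w. g w a b) z = 0 \<longleftrightarrow> z = m)"
    using m by blast
  have 2: "\<forall>z. 0 < z \<and> z \<le> zl a \<longrightarrow> g z a b > 0" using g_pos_left[OF ab] by blast
  have 3: "\<forall>z. zr b \<le> z \<and> z < 1 \<longrightarrow> g z a b > 0" using g_pos_right[OF ab] by blast
  have 4: "gmin a b < 0 \<longrightarrow>
        (\<exists>z1 z2. z1 < z2 \<and> {z\<in>{0<..<1}. g z a b = 0} = {z1, z2} \<and> zl a < z1 \<and> z2 < zr b)"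
  proof
    assume "gmin a b < 0"
    then have "g m a b < 0" using m(7) by simp
    then show "\<exists>z1 z2. z1 < z2 \<and> {z\<in>{0<..<1}. g z a b = 0} = {z1, z2} \<and> zl a < z1 \<and> z2 < zr b"
      by (rule g_roots[OF ab m(1,2,3,4)])
  qed
  have 5: "\<forall>z. zl a < z \<and> z < 1 \<longrightarrow> g z a b > g z a b1" using g_decr_b[OF ab(1)] b1 by blast
  show ?thesis using 1 2 3 4 5 by blast
qed

lemma gmin_le: fixes a b :: real assumes ab: "3 \<le> a" "a < b" "0 < z" "z < 1"
  shows "gmin a b \<le> g z a b"
proof -
  obtain m where "\<forall>z\<in>{0<..<1}. g m a b \<le> g z a b" "gmin a b = g m a b"
    using g_analysis[OF ab(1,2)] by metis
  then show ?thesis using assms by auto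
qed

lemma upward: fixes a b :: real assumes ab: "3 \<le> a" "a < b" and neg: "gmin a b < 0"
  shows "gmin a (b+1) < 0"
proof -
  obtain m where m: "0 < m" "m < 1" "gmin a b = g m a b"
    using g_analysis[OF ab] by metis
  have "zl a < m" using g_pos_left[OF ab m(1)] neg m(3) by (cases "m \<le> zl a") auto
  then have "g m a (b+1) < g m a b" using g_decr_b[OF ab(1)] m by blast
  moreover have "gmin a (b+1) \<le> g m a (b+1)" using ab m by (intro gmin_le) auto
  ultimately show ?thesis using neg m(3) by linarith
qed

lemma exists_neg: fixes ai :: int assumes "3 \<le> ai"
  shows "\<exists>n::nat. gmin (of_int ai) (of_int (ai + 1 + int n)) < 0"
proof -
  define A where "A = real_of_int ai"
  have A3: "3 \<le> A" using assms by (simp add: A_def)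
  note zl = zl_props[OF A3]
  define zs where "zs = (zl A + 1)/2"
  have zs: "0 < zs" "zs < 1" "zl A < zs" using zl by (auto simp: zs_def)
  have "f zs < 1/(A-1)" using f_less_iff[of zs "zl A"] zl zs by auto
  hence "(A-1) * f zs < 1" using A3 by (simp add: field_simps)
  define c where "c = 1 - (A-1) * f zs"
  have c: "c > 0" using \<open>(A-1) * f zs < 1\<close> by (simp add: c_def)
  define K where "K = 1/((1-zs)*c)"
  define n where "n = nat \<lceil>K\<rceil>"
  define B where "B = real_of_int (ai + 1 + int n)"
  have BA: "B = A + 1 + real n" by (simp add: B_def A_def)
  have "K \<le> real n" unfolding n_def by linarith
  hence "B - 1 > K" using BA A3 by linarith
  hence "(B-1)*c > K*c" using c by (intro mult_strict_right_mono) auto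
  moreover have "K*c = 1/(1-zs)" using c zs by (simp add: K_def field_simps)
  ultimately have h: "(B-1)*c > 1/(1-zs)" by simp
  have "g zs A B = -(B-1)*c + 1/(1-zs) - (A-1)" by (simp add: g_def c_def algebra_simps)
  hence "g zs A B < 0" using h A3 by linarith
  moreover have "gmin A B \<le> g zs A B" using A3 BA zs by (intro gmin_le) auto
  ultimately have "gmin A B < 0" by linarith
  then show ?thesis unfolding A_def B_def by blast
qed

theorem lemma2:
  fixes a :: int
  assumes "3 \<le> a"
  shows "(\<forall>b::int. a < b \<longrightarrow>
     (\<exists>m. 0 < m \<and> m < 1 \<and>
        strict_antimono_on {0<..m} (\<lambda>z. g z (real_of_int a) (real_of_int b)) \<and>
        strict_mono_on {m..<1} (\<lambda>z. g z (real_of_int a) (real_of_int b)) \<and>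
        (\<forall>z\<in>{0<..<1}. g m (real_of_int a) (real_of_int b) \<le> g z (real_of_int a) (real_of_int b)) \<and>
        (\<forall>z\<in>{0<..<1}. deriv (\<lambda>w. g w (real_of_int a) (real_of_int b)) z = 0 \<longleftrightarrow> z = m))
   \<and> (\<forall>z. 0 < z \<and> z \<le> zl (real_of_int a) \<longrightarrow> g z (real_of_int a) (real_of_int b) > 0)
   \<and> (\<forall>z. zr (real_of_int b) \<le> z \<and> z < 1 \<longrightarrow> g z (real_of_int a) (real_of_int b) > 0)
   \<and> (gmin (real_of_int a) (real_of_int b) < 0 \<longrightarrow>
        (\<exists>z1 z2. z1 < z2 \<and>
           {z\<in>{0<..<1}. g z (real_of_int a) (real_of_int b) = 0} = {z1, z2} \<and>
           zl (real_of_int a) < z1 \<and> z2 < zr (real_of_int b)))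
   \<and> (\<forall>z. zl (real_of_int a) < z \<and> z < 1 \<longrightarrow>
        g z (real_of_int a) (real_of_int b) > g z (real_of_int a) (real_of_int (b + 1))))
  \<and> (\<exists>b'::int. b' \<ge> a + 1 \<and>
       (\<forall>b::int. a < b \<and> b < b' \<longrightarrow> gmin (real_of_int a) (real_of_int b) \<ge> 0) \<and>
       (\<forall>b::int. b \<ge> b' \<longrightarrow> gmin (real_of_int a) (real_of_int b) < 0))"
proof (rule conjI, goal_cases)
  case 1 show ?case
    by (intro allI impI per_b) (use assms in auto)
next
  case 2
  define A where "A = real_of_int a"
  have A3: "3 \<le> A" using assms by (simp add: A_def)
  define Q where "Q n = (gmin A (real_of_int (a + 1 + int n)) < 0)" for n :: nat
  have exQ: "\<exists>n. Q n" using exists_neg[OF assms] by (simp add: Q_def A_def)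
  define n0 where "n0 = (LEAST n. Q n)"
  have Qn0: "Q n0" unfolding n0_def using exQ by (rule LeastI_ex)
  have Qup: "Q n" if "n0 \<le> n" for n
    using that
  proof (induction n rule: dec_induct)
    case base then show ?case by (rule Qn0)
  next
    case (step k)
    have "gmin A (real_of_int (a + 1 + int k) + 1) < 0"
      using step(3) A3 by (intro upward) (auto simp: Q_def A_def)
    then show ?case by (simp add: Q_def add.assoc)
  qed
  show ?case
  proof (intro exI[of _ "a + 1 + int n0"] conjI allI impI)
    show "a + 1 \<le> a + 1 + int n0" by simp
  next
    fix b :: int assume b: "a < b \<and> b < a + 1 + int n0"
    define n where "n = nat (b - a - 1)"
    have bn: "b = a + 1 + int n" using b by (simp add: n_def)
    have "n < n0" using b bn by linarith
    then have "\<not> Q n" unfolding n0_def by (rule not_less_Least)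
    then show "gmin (real_of_int a) (real_of_int b) \<ge> 0" by (simp add: Q_def A_def bn)
  next
    fix b :: int assume b: "a + 1 + int n0 \<le> b"
    define n where "n = nat (b - a - 1)"
    have bn: "b = a + 1 + int n" using b by (simp add: n_def)
    have "n0 \<le> n" using b bn by linarith
    then have "Q n" by (rule Qup)
    then show "gmin (real_of_int a) (real_of_int b) < 0" by (simp add: Q_def A_def bn)
  qed
qed


end
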